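(* Let $M>N$. Then for a generic $M$-element frame $\mathcal F=\{f_1,\dots,f_M\}$ for $\mathbb R^N$, the set of vectors $x\in\mathbb R^N$ such that every $y\in\mathbb R^N$ with $|\langle y,f_k\rangle|=|\langle x,f_k\rangle|$ for all $k$ satisfies $y=\pm x$ contains an open dense subset of $\mathbb R^N$.
   Context: An $M$-element frame for $\mathbb R^N$ is a spanning family $\{f_1,\dots,f_M\}\subset\mathbb R^N$; "generic" means: for all frames in an open dense subset of the set of $M$-element frames (topology of $N\times M$ real matrices of rank $N$, or equivalently of their ranges of coefficients in the Grassmannian $Gr(N,M)$). *)

theory Defs
  imports "HOL-Analysis.Analysis"
begin

text \<open>An M-element frame for R^N, represented as the family k \<mapsto> F $ k
  (k ranges over the finite index type 'm with CARD('m) = M, vectors in real^'n with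
  CARD('n) = N).\<close>
definition is_frame :: "(real^'n)^'m \<Rightarrow> bool" where
  "is_frame F \<longleftrightarrow> span (range (\<lambda>k. F $ k)) = UNIV"

definition recoverable_up_to_sign :: "(real^'n)^'m \<Rightarrow> real^'n \<Rightarrow> bool" where
  "recoverable_up_to_sign F x \<longleftrightarrow>
     (\<forall>y::real^'n. (\<forall>k. \<bar>y \<bullet> (F $ k)\<bar> = \<bar>x \<bullet> (F $ k)\<bar>) \<longrightarrow> y = x \<or> y = - x)"

end

theory Submission
  imports Defs "HOL-Computational_Algebra.Polynomial"
begin

definition subm :: "(real^'n)^'m \<Rightarrow> ('n \<Rightarrow> 'm) \<Rightarrow> real^'n^'n" where
  "subm F \<sigma> = (\<chi> i. F $ \<sigma> i)"

definition fullspark :: "(real^'n)^'m \<Rightarrow> bool" where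
  "fullspark F \<longleftrightarrow> (\<forall>\<sigma>::'n \<Rightarrow> 'm. inj \<sigma> \<longrightarrow> det (subm F \<sigma>) \<noteq> 0)"

lemma continuous_det_subm: "continuous_on UNIV (\<lambda>F::(real^'n)^'m. det (subm F \<sigma>))"
  unfolding det_def subm_def
  by (intro continuous_intros)

lemma open_fullspark: "open {F::(real^'n)^'m. fullspark F}"
proof -
  have "{F::(real^'n)^'m. fullspark F} = (\<Inter>\<sigma>\<in>{\<sigma>::'n\<Rightarrow>'m. inj \<sigma>}. {F. det (subm F \<sigma>) \<noteq> 0})"
    unfolding fullspark_def by auto
  also have "open \<dots>"
  proof (rule open_INT)
    show "finite {\<sigma>::'n\<Rightarrow>'m. inj \<sigma>}" by simp
    have "\<And>\<sigma>::'n\<Rightarrow>'m. open {F::(real^'n)^'m. det (subm F \<sigma>) \<noteq> 0}"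
      by (rule open_Collect_neq[OF continuous_det_subm continuous_on_const])
    then show "\<forall>\<sigma>\<in>{\<sigma>::'n\<Rightarrow>'m. inj \<sigma>}. open {F::(real^'n)^'m. det (subm F \<sigma>) \<noteq> 0}" by blast
  qed
  finally show ?thesis .
qed

lemma rows_subm: "rows (subm F \<sigma>) = range (\<lambda>i. F $ \<sigma> i)"
  by (auto simp: rows_def row_def subm_def)

lemma det_nz_rows:
  fixes A :: "real^'n^'n"
  assumes "det A \<noteq> 0"
  shows "span (rows A) = UNIV" "independent (rows A)"
proof -
  have "invertible A" using assms invertible_det_nz by blast
  then obtain B where "B ** A = mat 1" unfolding invertible_def by blast
  then show "span (rows A) = UNIV" using matrix_left_invertible_span_rows by blast
  show "independent (rows A)" using det_dependent_rows[of A] assms by (auto simp: dependent_vec_eq)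
qed

lemma fullspark_frame:
  assumes "CARD('n) \<le> CARD('m)" "fullspark (F::(real^'n)^'m)"
  shows "is_frame F"
proof -
  obtain \<sigma> :: "'n \<Rightarrow> 'm" where "inj \<sigma>"
    using card_le_inj[of "UNIV::'n set" "UNIV::'m set"] assms(1) by auto
  then have "det (subm F \<sigma>) \<noteq> 0" using assms(2) fullspark_def by blast
  then have "span (range (\<lambda>i. F $ \<sigma> i)) = UNIV" using det_nz_rows(1) rows_subm by metis
  moreover have "range (\<lambda>i. F $ \<sigma> i) \<subseteq> range (\<lambda>k. F $ k)" by auto
  then have "span (range (\<lambda>i. F $ \<sigma> i)) \<subseteq> span (range (\<lambda>k. F $ k))" by (rule span_mono)
  ultimately show ?thesis unfolding is_frame_def by auto
qed

lemma fullspark_indep: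
  fixes F :: "(real^'n)^'m"
  assumes "fullspark F" "card S \<le> CARD('n)" "CARD('n) \<le> CARD('m)"
  shows "independent ((\<lambda>k. F $ k) ` S) \<and> inj_on (\<lambda>k. F $ k) S"
proof -
  have "card S \<le> CARD('n)" by fact
  obtain S' where S': "S \<subseteq> S'" "card S' = CARD('n)"
  proof -
    note True = assms(3)
    have "card (UNIV - S) = CARD('m) - card S" by (simp add: card_Diff_subset)
    then have "CARD('n) - card S \<le> card (UNIV - S)" using True by simp
    then obtain R where R: "R \<subseteq> UNIV - S" "card R = CARD('n) - card S" "finite R"
      by (rule obtain_subset_with_card_n)
    have "card (S \<union> R) = card S + card R"
      by (rule card_Un_disjoint) (use R in auto)
    then have "card (S \<union> R) = CARD('n)" using R(2) \<open>card S \<le> CARD('n)\<close> by simp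
    then show ?thesis by (intro that[of "S \<union> R"]) auto
  qed
  obtain \<sigma> :: "'n \<Rightarrow> 'm" where bij: "bij_betw \<sigma> UNIV S'"
    using finite_same_card_bij[of "UNIV::'n set" S'] S' by auto
  then have inj: "inj \<sigma>" and ran: "range \<sigma> = S'" by (auto simp: bij_betw_def)
  have d: "det (subm F \<sigma>) \<noteq> 0" using assms(1) inj fullspark_def by blast
  have "independent ((\<lambda>k. F $ k) ` S')"
  proof -
    have "(\<lambda>k. F $ k) ` S' = rows (subm F \<sigma>)" using rows_subm[of F \<sigma>] ran by auto
    then show ?thesis using det_nz_rows(2)[OF d] by simp
  qed
  moreover have "inj_on (\<lambda>k. F $ k) S'"
  proof (rule inj_onI)
    fix a b assume ab: "a \<in> S'" "b \<in> S'" "F $ a = F $ b"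
    obtain i j where ij: "a = \<sigma> i" "b = \<sigma> j" using ab ran by blast
    show "a = b"
    proof (rule ccontr)
      assume "a \<noteq> b"
      then have "i \<noteq> j" using ij by auto
      moreover have "row i (subm F \<sigma>) = row j (subm F \<sigma>)"
        using ab ij by (simp add: row_def subm_def)
      ultimately have "det (subm F \<sigma>) = 0" by (rule det_identical_rows)
      then show False using d by simp
    qed
  qed
  ultimately show ?thesis
  proof (intro conjI)
    show "independent ((\<lambda>k. F $ k) ` S)"
      by (rule independent_mono[OF \<open>independent ((\<lambda>k. F $ k) ` S')\<close>]) (use S'(1) in auto)
    show "inj_on (\<lambda>k. F $ k) S"
      by (rule inj_on_subset[OF \<open>inj_on (\<lambda>k. F $ k) S'\<close> S'(1)])
  qed
qed

definition W :: "(real^'n)^'m \<Rightarrow> 'm set \<Rightarrow> (real^'n) set" where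
  "W F S = {y. \<forall>k\<in>S. y \<bullet> (F $ k) = 0}"

definition V :: "(real^'n)^'m \<Rightarrow> 'm set \<Rightarrow> (real^'n) set" where
  "V F S = {a + b | a b. a \<in> W F S \<and> b \<in> W F (- S)}"

lemma subspace_W: "subspace (W F S)"
  by (auto simp: subspace_def W_def inner_add_left)

lemma subspace_V: "subspace (V F S)"
  unfolding V_def by (intro subspace_sums subspace_W)

lemma dim_W:
  fixes F :: "(real^'n)^'m"
  assumes "fullspark F" "card S \<le> CARD('n)" "CARD('n) \<le> CARD('m)"
  shows "dim (W F S) + card S \<le> CARD('n)"
proof -
  let ?A = "span ((\<lambda>k. F $ k) ` S)"
  have ind: "independent ((\<lambda>k. F $ k) ` S)" and inj: "inj_on (\<lambda>k. F $ k) S"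
    using fullspark_indep[OF assms] by auto
  have e: "dim {y \<in> UNIV. \<forall>x \<in> ?A. orthogonal x y} + dim ?A = dim (UNIV :: (real^'n) set)"
    by (rule dim_subspace_orthogonal_to_vectors) auto
  have o: "orthogonal x y" if y: "y \<in> W F S" and x: "x \<in> ?A" for x y
  proof -
    have "orthogonal y x"
      by (rule orthogonal_to_span[OF x]) (use y in \<open>auto simp: W_def orthogonal_def\<close>)
    then show "orthogonal x y" by (simp add: orthogonal_commute)
  qed
  have sub: "W F S \<subseteq> {y \<in> UNIV. \<forall>x \<in> ?A. orthogonal x y}"
    using o by blast
  have "dim ?A = card S"
    using dim_span_eq_card_independent[OF ind] card_image[OF inj] by simp
  moreover have "dim (W F S) \<le> dim {y \<in> UNIV. \<forall>x \<in> ?A. orthogonal x y}"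
    by (rule dim_subset[OF sub])
  ultimately show ?thesis using e by simp
qed

lemma W_zero:
  fixes F :: "(real^'n)^'m"
  assumes "fullspark F" "CARD('n) \<le> CARD('m)" "u \<in> W F S" "u \<noteq> 0"
  shows "card S < CARD('n)"
proof (rule ccontr)
  assume "\<not> card S < CARD('n)"
  then obtain S0 where S0: "S0 \<subseteq> S" "card S0 = CARD('n)" "finite S0"
    by (metis not_less obtain_subset_with_card_n)
  have "dim (W F S0) + card S0 \<le> CARD('n)"
    by (rule dim_W) (use assms S0 in auto)
  then have "dim (W F S0) = 0" using S0 by simp
  then have "W F S0 \<subseteq> {0}" by simp
  moreover have "u \<in> W F S0" using assms(3) S0(1) by (auto simp: W_def)
  ultimately show False using assms(4) by auto
qed

lemma dim_V:
  fixes F :: "(real^'n)^'m"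
  assumes "fullspark F" "CARD('n) < CARD('m)" "card S < CARD('n)" "card (- S) < CARD('n)"
  shows "dim (V F S) < CARD('n)"
proof -
  have 1: "dim (W F S) + card S \<le> CARD('n)" by (rule dim_W) (use assms in auto)
  have 2: "dim (W F (- S)) + card (- S) \<le> CARD('n)" by (rule dim_W) (use assms in auto)
  have 3: "card S + card (- S) = CARD('m)"
    using card_Un_disjoint[of S "- S"] by (simp add: Un_commute)
  have "dim (V F S) + dim (W F S \<inter> W F (- S)) = dim (W F S) + dim (W F (- S))"
    unfolding V_def by (rule dim_sums_Int[OF subspace_W subspace_W])
  then show ?thesis using 1 2 3 assms(2) by linarith
qed

definition Good :: "nat \<Rightarrow> 'm set set" where
  "Good n = {S. card S < n \<and> card (- S) < n}"

lemma recover: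
  fixes F :: "(real^'n)^'m"
  assumes "fullspark F" "CARD('n) \<le> CARD('m)"
    and x: "x \<notin> (\<Union>S\<in>Good CARD('n). V F S)"
  shows "recoverable_up_to_sign F x"
  unfolding recoverable_up_to_sign_def
proof (intro allI impI)
  fix y assume h: "\<forall>k. \<bar>y \<bullet> F $ k\<bar> = \<bar>x \<bullet> F $ k\<bar>"
  show "y = x \<or> y = - x"
  proof (rule ccontr)
    assume ne: "\<not> (y = x \<or> y = - x)"
    define S where "S = {k. (y - x) \<bullet> F $ k = 0}"
    have u: "y - x \<in> W F S" by (simp add: W_def S_def)
    have v: "y + x \<in> W F (- S)"
    proof -
      have "(y + x) \<bullet> F $ k = 0" if "k \<notin> S" for k
      proof -
        have "y \<bullet> F $ k \<noteq> x \<bullet> F $ k" using that by (simp add: S_def inner_diff_left)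
        moreover have "\<bar>y \<bullet> F $ k\<bar> = \<bar>x \<bullet> F $ k\<bar>" using h by blast
        ultimately have "y \<bullet> F $ k = - (x \<bullet> F $ k)" by (auto simp: abs_if split: if_splits)
        then show ?thesis by (simp add: inner_add_left)
      qed
      then show ?thesis by (auto simp: W_def)
    qed
    have "y - x \<noteq> 0" "y + x \<noteq> 0" using ne by (auto simp: add_eq_0_iff)
    then have "card S < CARD('n)" "card (- S) < CARD('n)"
      using W_zero[OF assms(1,2) u] W_zero[OF assms(1,2) v] by auto
    then have G: "S \<in> Good CARD('n)" by (simp add: Good_def)
    have a: "(- (1/2)) *\<^sub>R (y - x) \<in> W F S" by (rule subspace_scale[OF subspace_W u])
    have b: "(1/2) *\<^sub>R (y + x) \<in> W F (- S)" by (rule subspace_scale[OF subspace_W v])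
    have "x = (- (1/2)) *\<^sub>R (y - x) + (1/2) *\<^sub>R (y + x)"
      by (simp add: algebra_simps scaleR_2[symmetric] del: scaleR_2)
    then have "x \<in> V F S" using a b unfolding V_def by blast
    then show False using x G by blast
  qed
qed

lemma interior_finite_Union:
  fixes A :: "'a set" and f :: "'a \<Rightarrow> 'b::topological_space set"
  assumes "finite A" "\<And>a. a \<in> A \<Longrightarrow> closed (f a) \<and> interior (f a) = {}"
  shows "interior (\<Union>a\<in>A. f a) = {}"
  using assms
proof (induction A rule: finite_induct)
  case empty
  then show ?case by simp
next
  case (insert a A)
  have "interior (f a \<union> (\<Union>b\<in>A. f b)) = interior (f a)"
    by (rule interior_closed_Un_empty_interior) (use insert in auto)
  then show ?case using insert by simp
qed

lemma good_set:
  fixes F :: "(real^'n)^'m"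
  assumes "fullspark F" "CARD('n) < CARD('m)"
  shows "\<exists>U :: (real^'n) set. open U \<and> closure U = UNIV \<and> U \<subseteq> {x. recoverable_up_to_sign F x}"
proof (intro exI conjI)
  let ?B = "\<Union>S\<in>Good CARD('n). V F S"
  have cl: "closed (V F S)" for S by (rule closed_subspace[OF subspace_V])
  have int: "interior (V F S) = {}" if "S \<in> Good CARD('n)" for S
    by (rule empty_interior_lowdim) (use dim_V[OF assms] that in \<open>auto simp: Good_def\<close>)
  have "interior ?B = {}"
    by (rule interior_finite_Union) (use cl int in auto)
  then show "closure (- ?B) = UNIV" unfolding closure_complement by simp
  show "open (- ?B)" using cl by (intro open_Compl closed_UN) auto
  show "- ?B \<subseteq> {x. recoverable_up_to_sign F x}"
    using recover[OF assms(1)] assms(2) by auto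
qed

lemma det_poly:
  fixes B C :: "real^'n^'n"
  shows "\<exists>p. \<forall>s. det (\<chi> i j. B$i$j + s * C$i$j) = poly p s"
proof (intro exI allI)
  fix s
  show "det (\<chi> i j. B$i$j + s * C$i$j) =
    poly (\<Sum>q\<in>{q. q permutes (UNIV::'n set)}. [:of_int (sign q):] * (\<Prod>i\<in>UNIV. [:B$i$(q i), C$i$(q i):])) s"
    by (simp add: det_def poly_sum poly_prod)
qed

lemma vandermonde_fullspark:
  "\<exists>A::(real^'n)^'m. fullspark A"
proof -
  obtain h :: "'n \<Rightarrow> nat" where h: "bij_betw h UNIV {0..<CARD('n)}"
    using ex_bij_betw_finite_nat[of "UNIV::'n set"] by auto
  obtain c :: "'m \<Rightarrow> nat" where c: "bij_betw c UNIV {0..<CARD('m)}"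
    using ex_bij_betw_finite_nat[of "UNIV::'m set"] by auto
  have hinj: "inj h" and hlt: "\<And>j. h j < CARD('n)" using h by (auto simp: bij_betw_def)
  have cinj: "inj c" using c by (auto simp: bij_betw_def)
  define A :: "(real^'n)^'m" where "A = (\<chi> k. \<chi> j. real (c k) ^ h j)"
  have "det (subm A \<sigma>) \<noteq> 0" if \<sigma>: "inj \<sigma>" for \<sigma> :: "'n \<Rightarrow> 'm"
  proof
    let ?X = "subm A \<sigma>"
    assume "det ?X = 0"
    then have "rank ?X \<noteq> CARD('n)" using det_eq_0_rank[of ?X] by simp
    then obtain w where w: "w \<noteq> 0" "?X *v w = 0"
      using matrix_nonfull_linear_equations_eq by blast
    define q where "q = (\<Sum>j\<in>UNIV. monom (w$j) (h j))"
    have pq: "poly q (real (c (\<sigma> i))) = 0" for i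
    proof -
      have "poly q (real (c (\<sigma> i))) = (\<Sum>j\<in>UNIV. ?X$i$j * w$j)"
        by (simp add: q_def poly_sum poly_monom subm_def A_def mult.commute)
      also have "\<dots> = (?X *v w) $ i" by (simp add: matrix_vector_mult_def)
      finally show ?thesis using w(2) by simp
    qed
    obtain j0 where j0: "w $ j0 \<noteq> 0" using w(1) by (metis vec_eq_iff zero_index)
    have "coeff q (h j0) = (\<Sum>j\<in>UNIV. if j = j0 then w$j else 0)"
      unfolding q_def coeff_sum coeff_monom
      by (intro sum.cong refl) (use hinj in \<open>auto dest: injD\<close>)
    also have "\<dots> = w $ j0" by simp
    finally have "q \<noteq> 0" using j0 by auto
    have deg: "degree q \<le> CARD('n) - 1"
      unfolding q_def
    proof (rule degree_sum_le)
      fix j :: 'n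
      have "h j \<le> CARD('n) - 1" using hlt[of j] by linarith
      then show "degree (monom (w$j) (h j)) \<le> CARD('n) - 1"
        using degree_monom_le[of "w$j" "h j"] by linarith
    qed simp
    have "range (\<lambda>i. real (c (\<sigma> i))) \<subseteq> {x. poly q x = 0}" using pq by auto
    then have "card (range (\<lambda>i. real (c (\<sigma> i)))) \<le> card {x. poly q x = 0}"
      by (rule card_mono[OF poly_roots_finite[OF \<open>q \<noteq> 0\<close>]])
    moreover have "card (range (\<lambda>i. real (c (\<sigma> i)))) = CARD('n)"
    proof -
      have "inj (\<lambda>i. real (c (\<sigma> i)))" using cinj \<sigma> by (auto simp: inj_def)
      then show ?thesis by (simp add: card_image)
    qed
    moreover have "card {x. poly q x = 0} \<le> degree q" by (rule card_poly_roots_bound[OF \<open>q \<noteq> 0\<close>])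
    moreover have "CARD('n) > 0" by simp
    ultimately show False using deg by linarith
  qed
  then show ?thesis unfolding fullspark_def by blast
qed

lemma dense_fullspark:
  fixes F :: "(real^'n)^'m"
  shows "F \<in> closure {F. fullspark F}"
proof -
  obtain A :: "(real^'n)^'m" where A: "fullspark A" using vandermonde_fullspark by blast
  define P where "P s = F + s *\<^sub>R (A - F)" for s :: real
  have subm_P: "subm (P s) \<sigma> = (\<chi> i j. subm F \<sigma> $i$j + s * subm (A - F) \<sigma> $i$j)" for s \<sigma>
    by (simp add: vec_eq_iff subm_def P_def)
  have fin: "finite {s. det (subm (P s) \<sigma>) = 0}" if \<sigma>: "inj \<sigma>" for \<sigma> :: "'n \<Rightarrow> 'm"
  proof -
    obtain p where p: "\<And>s. det (\<chi> i j. subm F \<sigma> $i$j + s * subm (A - F) \<sigma> $i$j) = poly p s"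
      using det_poly by blast
    have e: "det (subm (P s) \<sigma>) = poly p s" for s using p subm_P by simp
    have "P 1 = A" by (simp add: P_def)
    then have "poly p 1 \<noteq> 0" using e[of 1] A \<sigma> fullspark_def by metis
    then have "p \<noteq> 0" by auto
    then show ?thesis using poly_roots_finite[of p] e by simp
  qed
  define Z where "Z = (\<Union>\<sigma>\<in>{\<sigma>::'n\<Rightarrow>'m. inj \<sigma>}. {s. det (subm (P s) \<sigma>) = 0})"
  have finZ: "finite Z" unfolding Z_def using fin by auto
  show ?thesis unfolding closure_approachable
  proof (intro allI impI)
    fix e :: real assume e: "e > 0"
    define n where "n = norm (A - F)"
    have n: "n \<ge> 0" by (simp add: n_def)
    define d where "d = min 1 (e / (n + 1))"
    have d: "d > 0" using e n by (simp add: d_def)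
    then have "infinite ({0<..<d} - Z)" using finZ by (simp add: Diff_infinite_finite)
    then obtain s where s: "s \<in> {0<..<d}" "s \<notin> Z" by (metis Diff_iff finite.emptyI ex_in_conv)
    have "fullspark (P s)" unfolding fullspark_def using s(2) by (auto simp: Z_def)
    moreover have "dist (P s) F < e"
    proof -
      have "dist (P s) F = s * n" using s(1) by (simp add: P_def dist_norm n_def)
      also have "\<dots> \<le> s * (n + 1)" using s(1) by (simp add: mult_left_mono)
      also have "\<dots> < e"
      proof -
        have "s < e / (n + 1)" using s(1) by (simp add: d_def)
        then show ?thesis using n by (simp add: field_simps)
      qed
      finally show ?thesis .
    qed
    ultimately show "\<exists>y\<in>{F. fullspark F}. dist y F < e" by blast
  qed
qed

theorem theorem2p9:
  assumes "CARD('m::finite) > CARD('n::finite)"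
  shows "\<exists>G :: ((real^'n)^'m) set.
           open G \<and> G \<subseteq> {F. is_frame F} \<and> {F. is_frame F} \<subseteq> closure G \<and>
           (\<forall>F\<in>G. \<exists>U :: (real^'n) set. open U \<and> closure U = UNIV \<and>
                      U \<subseteq> {x. recoverable_up_to_sign F x})"
proof (intro exI conjI)
  show "open {F::(real^'n)^'m. fullspark F}" by (rule open_fullspark)
  show "{F::(real^'n)^'m. fullspark F} \<subseteq> {F. is_frame F}"
    using fullspark_frame assms by (metis less_imp_le mem_Collect_eq subsetI)
  show "{F. is_frame F} \<subseteq> closure {F::(real^'n)^'m. fullspark F}"
    using dense_fullspark by blast
  show "\<forall>F\<in>{F::(real^'n)^'m. fullspark F}. \<exists>U :: (real^'n) set. open U \<and> closure U = UNIV \<and>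
                      U \<subseteq> {x. recoverable_up_to_sign F x}"
    using good_set assms by blast
qed

end
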